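(* Let $\alpha,\beta>0$, let $c(\psi)=\sqrt{\alpha\cos^2\psi+\beta\sin^2\psi}$, let $p\ge 0$ be an integer, and let $X_{\Delta x}^p(\Omega)$ be the discontinuous piecewise polynomial space on the periodic mesh described in the context. Suppose $R,S,\psi:[0,T]\to X_{\Delta x}^p(\Omega)$ are differentiable in time and, for every $t\in[0,T]$, satisfy (with $c=c(\psi(x,t))$ inside the integrals, $x$-derivatives taken cellwise, and all sums over $j=1,\dots,N$) $$\sum_j\int_{\Omega_j}R_t\phi\,dx+\sum_j\int_{\Omega_j}cR\phi_x\,dx-\sum_j\overline{c}_{j+1/2}\overline{R}_{j+1/2}\phi^-_{j+1/2}+\sum_j\overline{c}_{j-1/2}\overline{R}_{j-1/2}\phi^+_{j-1/2}=\mathcal{B}(\phi)$$ for all $\phi\in X_{\Delta x}^p(\Omega)$, $$\sum_j\int_{\Omega_j}S_t\eta\,dx-\sum_j\int_{\Omega_j}cS\eta_x\,dx+\sum_j\overline{c}_{j+1/2}\overline{S}_{j+1/2}\eta^-_{j+1/2}-\sum_j\overline{c}_{j-1/2}\overline{S}_{j-1/2}\eta^+_{j-1/2}=\mathcal{B}(\eta)$$ for all $\eta\in X_{\Delta x}^p(\Omega)$, and $\sum_j\int_{\Omega_j}\psi_t\zeta\,dx=\sum_j\int_{\Omega_j}\frac{R+S}{2}\zeta\,dx$ for all $\zeta\in X_{\Delta x}^p(\Omega)$, where for a test function $\chi$ $$\mathcal{B}(\chi)=\tfrac12\sum_j\int_{\Omega_j}c(R\chi)_x\,dx-\tfrac12\sum_j\overline{c}_{j+1/2}R^-_{j+1/2}\chi^-_{j+1/2}+\tfrac12\sum_j\overline{c}_{j-1/2}R^+_{j-1/2}\chi^+_{j-1/2}-\tfrac12\sum_j\int_{\Omega_j}c(S\chi)_x\,dx+\tfrac12\sum_j\overline{c}_{j+1/2}S^-_{j+1/2}\chi^-_{j+1/2}-\tfrac12\sum_j\overline{c}_{j-1/2}S^+_{j-1/2}\chi^+_{j-1/2}.$$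 Then $$\frac{d}{dt}\left(\sum_{j=1}^N\int_{\Omega_j}\frac{R^2+S^2}{2}\,dx\right)=0.$$
   Context: The domain $\Omega$ is partitioned into cells $\Omega_j=[x_{j-1/2},x_{j+1/2}]$, $j=1,\dots,N$, with $\Delta x_j=x_{j+1/2}-x_{j-1/2}$. $X_{\Delta x}^p(\Omega)=\{u\in L^2(\Omega): u|_{\Omega_j}$ is a polynomial of degree $\le p$ for each $j\}$. For a grid function $u$, $u^+_{j+1/2}$ and $u^-_{j+1/2}$ denote its traces at $x_{j+1/2}$ from the right and left respectively; $\overline{u}_{j+1/2}=(u^+_{j+1/2}+u^-_{j+1/2})/2$ and $\llbracket u\rrbracket_{j+1/2}=u^+_{j+1/2}-u^-_{j+1/2}$. Also $c^\pm_{j+1/2}=c(\psi^\pm_{j+1/2})$ and $\overline{c}_{j+1/2}=(c^+_{j+1/2}+c^-_{j+1/2})/2$. Periodic boundary conditions: the endpoints $x_{1/2}$ and $x_{N+1/2}$ are identified, i.e. $u^-_{1/2}:=u^-_{N+1/2}$ (trace from cell $N$) and $u^+_{N+1/2}:=u^+_{1/2}$ (trace from cell $1$), for all grid functions including $\psi$ and the test functions. *)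

theory Defs
  imports "HOL-Analysis.Analysis" "HOL-Computational_Algebra.Polynomial"
begin

text \<open>Mesh: xn k = x_{k+1/2}, k = 0..N; cell j (j = 1..N) is [xn (j-1), xn j].
  A grid function in X^p is a family u :: nat => real poly, u j being the
  polynomial on cell j (only j = 1..N matter).\<close>

definition cfun :: "real \<Rightarrow> real \<Rightarrow> real \<Rightarrow> real" where
  "cfun \<alpha> \<beta> y = sqrt (\<alpha> * (cos y)\<^sup>2 + \<beta> * (sin y)\<^sup>2)"

definition inX :: "nat \<Rightarrow> nat \<Rightarrow> (nat \<Rightarrow> real poly) \<Rightarrow> bool" where
  "inX p N u \<longleftrightarrow> (\<forall>j\<in>{1..N}. degree (u j) \<le> p)"

definition cellint :: "(nat \<Rightarrow> real) \<Rightarrow> nat \<Rightarrow> (real \<Rightarrow> real) \<Rightarrow> real" where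
  "cellint xn j f = integral {xn (j - 1)..xn j} f"

text \<open>Left trace u^-_{k+1/2} and right trace u^+_{k+1/2}, k = 0..N, periodic.\<close>
definition trm :: "(nat \<Rightarrow> real) \<Rightarrow> nat \<Rightarrow> (nat \<Rightarrow> real poly) \<Rightarrow> nat \<Rightarrow> real" where
  "trm xn N u k = (if k = 0 then poly (u N) (xn N) else poly (u k) (xn k))"

definition trp :: "(nat \<Rightarrow> real) \<Rightarrow> nat \<Rightarrow> (nat \<Rightarrow> real poly) \<Rightarrow> nat \<Rightarrow> real" where
  "trp xn N u k = (if k = N then poly (u 1) (xn 0) else poly (u (Suc k)) (xn k))"

definition avg :: "(nat \<Rightarrow> real) \<Rightarrow> nat \<Rightarrow> (nat \<Rightarrow> real poly) \<Rightarrow> nat \<Rightarrow> real" where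
  "avg xn N u k = (trp xn N u k + trm xn N u k) / 2"

definition cbar :: "real \<Rightarrow> real \<Rightarrow> (nat \<Rightarrow> real) \<Rightarrow> nat \<Rightarrow> (nat \<Rightarrow> real poly) \<Rightarrow> nat \<Rightarrow> real" where
  "cbar \<alpha> \<beta> xn N \<psi> k = (cfun \<alpha> \<beta> (trp xn N \<psi> k) + cfun \<alpha> \<beta> (trm xn N \<psi> k)) / 2"

definition Bterm :: "real \<Rightarrow> real \<Rightarrow> (nat \<Rightarrow> real) \<Rightarrow> nat \<Rightarrow> (nat \<Rightarrow> real poly)
    \<Rightarrow> (nat \<Rightarrow> real poly) \<Rightarrow> (nat \<Rightarrow> real poly) \<Rightarrow> (nat \<Rightarrow> real poly) \<Rightarrow> real" where
  "Bterm \<alpha> \<beta> xn N \<psi> R S w =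
     (1/2) * (\<Sum>j=1..N. cellint xn j (\<lambda>x. cfun \<alpha> \<beta> (poly (\<psi> j) x) * poly (pderiv (R j * w j)) x))
   - (1/2) * (\<Sum>j=1..N. cbar \<alpha> \<beta> xn N \<psi> j * trm xn N R j * trm xn N w j)
   + (1/2) * (\<Sum>j=1..N. cbar \<alpha> \<beta> xn N \<psi> (j - 1) * trp xn N R (j - 1) * trp xn N w (j - 1))
   - (1/2) * (\<Sum>j=1..N. cellint xn j (\<lambda>x. cfun \<alpha> \<beta> (poly (\<psi> j) x) * poly (pderiv (S j * w j)) x))
   + (1/2) * (\<Sum>j=1..N. cbar \<alpha> \<beta> xn N \<psi> j * trm xn N S j * trm xn N w j)
   - (1/2) * (\<Sum>j=1..N. cbar \<alpha> \<beta> xn N \<psi> (j - 1) * trp xn N S (j - 1) * trp xn N w (j - 1))"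

end

theory Submission
  imports Defs
begin

lemma alg0:
  fixes c mR pR mS pS :: real
  shows "c * ((pR + mR) / 2) * mR - c * ((pR + mR) / 2) * pR - 1/2 * (c * mR * mR) + 1/2 * (c * pR * pR)
     + 1/2 * (c * mS * mR) - 1/2 * (c * pS * pR) - c * ((pS + mS) / 2) * mS + c * ((pS + mS) / 2) * pS
     - 1/2 * (c * mR * mS) + 1/2 * (c * pR * pS) + 1/2 * (c * mS * mS) - 1/2 * (c * pS * pS) = 0"
  by (simp add: field_simps)

lemma poly_le:
  fixes P :: "real poly"
  assumes "degree P \<le> p"
  shows "poly P x = (\<Sum>i\<le>p. coeff P i * x ^ i)"
proof -
  have "poly P x = (\<Sum>i\<le>degree P. coeff P i * x ^ i)" by (rule poly_altdef)
  also have "\<dots> = (\<Sum>i\<le>p. coeff P i * x ^ i)"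
    by (rule sum.mono_neutral_left) (use assms in \<open>auto simp: coeff_eq_0\<close>)
  finally show ?thesis .
qed

lemma int_prod:
  fixes P Q :: "real poly"
  assumes "degree P \<le> p" "degree Q \<le> p"
  shows "integral {a..b} (\<lambda>x. poly P x * poly Q x)
     = (\<Sum>i\<le>p. \<Sum>k\<le>p. coeff P i * coeff Q k * integral {a..b} (\<lambda>x. x ^ (i + k)))"
proof -
  have "(\<lambda>x. poly P x * poly Q x) = (\<lambda>x. \<Sum>i\<le>p. \<Sum>k\<le>p. coeff P i * coeff Q k * x ^ (i + k))"
    by (simp add: poly_le[OF assms(1)] poly_le[OF assms(2)] sum_product power_add algebra_simps)
  then have "integral {a..b} (\<lambda>x. poly P x * poly Q x)
      = (\<Sum>i\<le>p. integral {a..b} (\<lambda>x. \<Sum>k\<le>p. coeff P i * coeff Q k * x ^ (i + k)))"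
    by (simp add: integral_sum integrable_continuous_interval continuous_intros)
  also have "\<dots> = (\<Sum>i\<le>p. \<Sum>k\<le>p. integral {a..b} (\<lambda>x. coeff P i * coeff Q k * x ^ (i + k)))"
    by (simp add: integral_sum integrable_continuous_interval continuous_intros)
  also have "\<dots> = (\<Sum>i\<le>p. \<Sum>k\<le>p. coeff P i * coeff Q k * integral {a..b} (\<lambda>x. x ^ (i + k)))"
    by simp
  finally show ?thesis .
qed

lemma deriv_cell:
  fixes P :: "real \<Rightarrow> real poly"
  assumes "t \<in> A" "\<forall>s\<in>A. degree (P s) \<le> p" "degree Pt \<le> p"
    "\<forall>i. ((\<lambda>s. coeff (P s) i) has_real_derivative coeff Pt i) (at t within A)"
  shows "((\<lambda>s. integral {a..b} (\<lambda>x. poly (P s) x * poly (P s) x)) has_real_derivative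
          2 * integral {a..b} (\<lambda>x. poly Pt x * poly (P t) x)) (at t within A)"
proof -
  define M where "M i k = integral {a..b} (\<lambda>x::real. x ^ (i + k))" for i k
  have D: "((\<lambda>s. \<Sum>i\<le>p. \<Sum>k\<le>p. coeff (P s) i * coeff (P s) k * M i k) has_real_derivative
     (\<Sum>i\<le>p. \<Sum>k\<le>p. (coeff Pt i * coeff (P t) k + coeff (P t) i * coeff Pt k) * M i k)) (at t within A)"
  proof (intro DERIV_sum)
    fix i k
    have "((\<lambda>s. coeff (P s) i * coeff (P s) k * M i k) has_real_derivative
        (coeff Pt i * coeff (P t) k + coeff Pt k * coeff (P t) i) * M i k) (at t within A)"
      by (intro DERIV_cmult_right DERIV_mult assms(4)[rule_format])
    then show "((\<lambda>s. coeff (P s) i * coeff (P s) k * M i k) has_real_derivative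
        (coeff Pt i * coeff (P t) k + coeff (P t) i * coeff Pt k) * M i k) (at t within A)"
      by (simp add: algebra_simps)
  qed
  have "(\<Sum>i\<le>p. \<Sum>k\<le>p. (coeff Pt i * coeff (P t) k + coeff (P t) i * coeff Pt k) * M i k)
     = integral {a..b} (\<lambda>x. poly Pt x * poly (P t) x) + integral {a..b} (\<lambda>x. poly (P t) x * poly Pt x)"
  proof -
    have e1: "integral {a..b} (\<lambda>x. poly Pt x * poly (P t) x) = (\<Sum>i\<le>p. \<Sum>k\<le>p. coeff Pt i * coeff (P t) k * M i k)"
      using assms by (simp add: int_prod M_def)
    have e2: "integral {a..b} (\<lambda>x. poly (P t) x * poly Pt x) = (\<Sum>i\<le>p. \<Sum>k\<le>p. coeff (P t) i * coeff Pt k * M i k)"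
      using assms by (simp add: int_prod M_def)
    show ?thesis by (simp add: e1 e2 distrib_right sum.distrib)
  qed
  also have "\<dots> = 2 * integral {a..b} (\<lambda>x. poly Pt x * poly (P t) x)"
    by (simp add: mult.commute)
  finally have D': "((\<lambda>s. \<Sum>i\<le>p. \<Sum>k\<le>p. coeff (P s) i * coeff (P s) k * M i k) has_real_derivative
      2 * integral {a..b} (\<lambda>x. poly Pt x * poly (P t) x)) (at t within A)"
    using D by simp
  show ?thesis
    by (rule has_field_derivative_transform_within[OF D' zero_less_one assms(1)])
       (use assms(2) in \<open>simp add: int_prod[of _ p] M_def\<close>)
qed

lemma shift_sum:
  fixes f :: "nat \<Rightarrow> real"
  assumes "N \<ge> 1" "f 0 = f N"
  shows "(\<Sum>j=1..N. f (j - 1)) = (\<Sum>j=1..N. f j)"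
proof -
  obtain M where N: "N = Suc M" using assms(1) by (cases N) auto
  have "(\<Sum>j=1..N. f (j - 1)) = (\<Sum>j=0..M. f j)"
    unfolding N using sum.shift_bounds_cl_Suc_ivl[of "\<lambda>j. f (j - 1)" 0 M] by simp
  also have "\<dots> = f 0 + (\<Sum>j=1..M. f j)" by (simp add: sum.atLeast_Suc_atMost)
  also have "\<dots> = (\<Sum>j=1..N. f j)" using assms(2) unfolding N by simp
  finally show ?thesis .
qed

theorem proposition2p1:
  fixes \<alpha> \<beta> T :: real and p N :: nat and xn :: "nat \<Rightarrow> real"
    and R S \<psi> Rt St \<psi>t :: "real \<Rightarrow> nat \<Rightarrow> real poly"
  assumes "\<alpha> > 0" and "\<beta> > 0"
    and "N \<ge> 1" and mesh: "\<forall>k<N. xn k < xn (Suc k)"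
    and inX: "\<forall>t\<in>{0..T}. inX p N (R t) \<and> inX p N (S t) \<and> inX p N (\<psi> t)
                 \<and> inX p N (Rt t) \<and> inX p N (St t) \<and> inX p N (\<psi>t t)"
    and dR: "\<forall>t\<in>{0..T}. \<forall>j\<in>{1..N}. \<forall>i.
               ((\<lambda>s. coeff (R s j) i) has_real_derivative coeff (Rt t j) i) (at t within {0..T})"
    and dS: "\<forall>t\<in>{0..T}. \<forall>j\<in>{1..N}. \<forall>i.
               ((\<lambda>s. coeff (S s j) i) has_real_derivative coeff (St t j) i) (at t within {0..T})"
    and d\<psi>: "\<forall>t\<in>{0..T}. \<forall>j\<in>{1..N}. \<forall>i.
               ((\<lambda>s. coeff (\<psi> s j) i) has_real_derivative coeff (\<psi>t t j) i) (at t within {0..T})"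
    and eqR: "\<forall>t\<in>{0..T}. \<forall>\<phi>. inX p N \<phi> \<longrightarrow>
        (\<Sum>j=1..N. cellint xn j (\<lambda>x. poly (Rt t j) x * poly (\<phi> j) x))
      + (\<Sum>j=1..N. cellint xn j (\<lambda>x. cfun \<alpha> \<beta> (poly (\<psi> t j) x) * poly (R t j) x * poly (pderiv (\<phi> j)) x))
      - (\<Sum>j=1..N. cbar \<alpha> \<beta> xn N (\<psi> t) j * avg xn N (R t) j * trm xn N \<phi> j)
      + (\<Sum>j=1..N. cbar \<alpha> \<beta> xn N (\<psi> t) (j - 1) * avg xn N (R t) (j - 1) * trp xn N \<phi> (j - 1))
      = Bterm \<alpha> \<beta> xn N (\<psi> t) (R t) (S t) \<phi>"
    and eqS: "\<forall>t\<in>{0..T}. \<forall>\<eta>. inX p N \<eta> \<longrightarrow>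
        (\<Sum>j=1..N. cellint xn j (\<lambda>x. poly (St t j) x * poly (\<eta> j) x))
      - (\<Sum>j=1..N. cellint xn j (\<lambda>x. cfun \<alpha> \<beta> (poly (\<psi> t j) x) * poly (S t j) x * poly (pderiv (\<eta> j)) x))
      + (\<Sum>j=1..N. cbar \<alpha> \<beta> xn N (\<psi> t) j * avg xn N (S t) j * trm xn N \<eta> j)
      - (\<Sum>j=1..N. cbar \<alpha> \<beta> xn N (\<psi> t) (j - 1) * avg xn N (S t) (j - 1) * trp xn N \<eta> (j - 1))
      = Bterm \<alpha> \<beta> xn N (\<psi> t) (R t) (S t) \<eta>"
    and eq\<psi>: "\<forall>t\<in>{0..T}. \<forall>\<zeta>. inX p N \<zeta> \<longrightarrow>
        (\<Sum>j=1..N. cellint xn j (\<lambda>x. poly (\<psi>t t j) x * poly (\<zeta> j) x))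
      = (\<Sum>j=1..N. cellint xn j (\<lambda>x. (poly (R t j) x + poly (S t j) x) / 2 * poly (\<zeta> j) x))"
  shows "\<forall>t\<in>{0..T}.
    ((\<lambda>s. \<Sum>j=1..N. cellint xn j (\<lambda>x. ((poly (R s j) x)\<^sup>2 + (poly (S s j) x)\<^sup>2) / 2))
       has_real_derivative 0) (at t within {0..T})"
  proof
  fix t assume t: "t \<in> {0..T}"
  have N1: "N \<ge> 1" by fact
  have trp0: "\<And>u. trp xn N u 0 = trp xn N u N" using N1 by (simp add: trp_def)
  have trm0: "\<And>u. trm xn N u 0 = trm xn N u N" using N1 by (simp add: trm_def)
  have avg0: "\<And>u. avg xn N u 0 = avg xn N u N" by (simp add: avg_def trp0 trm0)
  have cbar0: "\<And>u. cbar \<alpha> \<beta> xn N u 0 = cbar \<alpha> \<beta> xn N u N" by (simp add: cbar_def trp0 trm0)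
  note per = trp0 trm0 avg0 cbar0
  have degs: "\<And>s j. s \<in> {0..T} \<Longrightarrow> j \<in> {1..N} \<Longrightarrow> degree (R s j) \<le> p \<and> degree (S s j) \<le> p
       \<and> degree (Rt s j) \<le> p \<and> degree (St s j) \<le> p"
    using inX by (auto simp: inX_def)
  have cont: "\<And>P Q :: real poly. (\<lambda>x. poly P x * poly Q x) integrable_on {a..b}" for a b
    by (intro integrable_continuous_interval continuous_intros)
  have dj: "((\<lambda>s. cellint xn j (\<lambda>x. ((poly (R s j) x)\<^sup>2 + (poly (S s j) x)\<^sup>2) / 2)) has_real_derivative
      (cellint xn j (\<lambda>x. poly (Rt t j) x * poly (R t j) x) + cellint xn j (\<lambda>x. poly (St t j) x * poly (S t j) x)))
      (at t within {0..T})" if j: "j \<in> {1..N}" for j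
  proof -
    have eqf: "cellint xn j (\<lambda>x. ((poly (R s j) x)\<^sup>2 + (poly (S s j) x)\<^sup>2) / 2)
       = (1/2) * integral {xn (j-1)..xn j} (\<lambda>x. poly (R s j) x * poly (R s j) x)
       + (1/2) * integral {xn (j-1)..xn j} (\<lambda>x. poly (S s j) x * poly (S s j) x)" for s
    proof -
      have "(\<lambda>x. ((poly (R s j) x)\<^sup>2 + (poly (S s j) x)\<^sup>2) / 2)
          = (\<lambda>x. (1/2) * (poly (R s j) x * poly (R s j) x) + (1/2) * (poly (S s j) x * poly (S s j) x))"
        by (simp add: power2_eq_square field_simps)
      then show ?thesis unfolding cellint_def
        by (simp add: integral_add cont integrable_on_cmult_left)
    qed
    have dR': "((\<lambda>s. integral {xn (j-1)..xn j} (\<lambda>x. poly (R s j) x * poly (R s j) x)) has_real_derivative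
        2 * integral {xn (j-1)..xn j} (\<lambda>x. poly (Rt t j) x * poly (R t j) x)) (at t within {0..T})"
      by (rule deriv_cell[where p=p]) (use t j degs dR in auto)
    have dS': "((\<lambda>s. integral {xn (j-1)..xn j} (\<lambda>x. poly (S s j) x * poly (S s j) x)) has_real_derivative
        2 * integral {xn (j-1)..xn j} (\<lambda>x. poly (St t j) x * poly (S t j) x)) (at t within {0..T})"
      by (rule deriv_cell[where p=p]) (use t j degs dS in auto)
    have "((\<lambda>s. (1/2) * integral {xn (j-1)..xn j} (\<lambda>x. poly (R s j) x * poly (R s j) x)
       + (1/2) * integral {xn (j-1)..xn j} (\<lambda>x. poly (S s j) x * poly (S s j) x)) has_real_derivative
        (1/2) * (2 * integral {xn (j-1)..xn j} (\<lambda>x. poly (Rt t j) x * poly (R t j) x))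
       + (1/2) * (2 * integral {xn (j-1)..xn j} (\<lambda>x. poly (St t j) x * poly (S t j) x))) (at t within {0..T})"
      by (intro DERIV_add DERIV_cmult dR' dS')
    then show ?thesis unfolding eqf by (simp add: cellint_def)
  qed
  let ?c = "cbar \<alpha> \<beta> xn N (\<psi> t)"
  let ?aR = "avg xn N (R t)" let ?mR = "trm xn N (R t)" let ?pR = "trp xn N (R t)"
  let ?aS = "avg xn N (S t)" let ?mS = "trm xn N (S t)" let ?pS = "trp xn N (S t)"
  let ?cf = "\<lambda>j x. cfun \<alpha> \<beta> (poly (\<psi> t j) x)"
  have inR: "inX p N (R t)" and inS: "inX p N (S t)" using inX t by auto
  note hR = eqR[rule_format, OF t inR, unfolded Bterm_def]
  note hS = eqS[rule_format, OF t inS, unfolded Bterm_def]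
  have I1: "(\<Sum>j=1..N. cellint xn j (\<lambda>x. ?cf j x * poly (pderiv (R t j * R t j)) x))
     = 2 * (\<Sum>j=1..N. cellint xn j (\<lambda>x. ?cf j x * poly (R t j) x * poly (pderiv (R t j)) x))"
  proof -
    have "cellint xn j (\<lambda>x. ?cf j x * poly (pderiv (R t j * R t j)) x)
       = 2 * cellint xn j (\<lambda>x. ?cf j x * poly (R t j) x * poly (pderiv (R t j)) x)" for j
    proof -
      have "(\<lambda>x. ?cf j x * poly (pderiv (R t j * R t j)) x) = (\<lambda>x. 2 * (?cf j x * poly (R t j) x * poly (pderiv (R t j)) x))"
        by (simp add: pderiv_mult algebra_simps)
      then show ?thesis unfolding cellint_def by simp
    qed
    then show ?thesis by (simp add: sum_distrib_left)
  qed
  have I2: "(\<Sum>j=1..N. cellint xn j (\<lambda>x. ?cf j x * poly (pderiv (S t j * S t j)) x))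
     = 2 * (\<Sum>j=1..N. cellint xn j (\<lambda>x. ?cf j x * poly (S t j) x * poly (pderiv (S t j)) x))"
  proof -
    have "cellint xn j (\<lambda>x. ?cf j x * poly (pderiv (S t j * S t j)) x)
       = 2 * cellint xn j (\<lambda>x. ?cf j x * poly (S t j) x * poly (pderiv (S t j)) x)" for j
    proof -
      have "(\<lambda>x. ?cf j x * poly (pderiv (S t j * S t j)) x) = (\<lambda>x. 2 * (?cf j x * poly (S t j) x * poly (pderiv (S t j)) x))"
        by (simp add: pderiv_mult algebra_simps)
      then show ?thesis unfolding cellint_def by simp
    qed
    then show ?thesis by (simp add: sum_distrib_left)
  qed
  have I3: "(\<Sum>j=1..N. cellint xn j (\<lambda>x. ?cf j x * poly (pderiv (S t j * R t j)) x))
     = (\<Sum>j=1..N. cellint xn j (\<lambda>x. ?cf j x * poly (pderiv (R t j * S t j)) x))"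
    by (simp add: mult.commute)
  have s1: "(\<Sum>j=1..N. ?c (j-1) * ?aR (j-1) * ?pR (j-1)) = (\<Sum>j=1..N. ?c j * ?aR j * ?pR j)"
    using shift_sum[OF N1, of "\<lambda>k. ?c k * ?aR k * ?pR k"] by (simp add: per)
  have s2: "(\<Sum>j=1..N. ?c (j-1) * ?pR (j-1) * ?pR (j-1)) = (\<Sum>j=1..N. ?c j * ?pR j * ?pR j)"
    using shift_sum[OF N1, of "\<lambda>k. ?c k * ?pR k * ?pR k"] by (simp add: per)
  have s3: "(\<Sum>j=1..N. ?c (j-1) * ?pS (j-1) * ?pR (j-1)) = (\<Sum>j=1..N. ?c j * ?pS j * ?pR j)"
    using shift_sum[OF N1, of "\<lambda>k. ?c k * ?pS k * ?pR k"] by (simp add: per)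
  have s4: "(\<Sum>j=1..N. ?c (j-1) * ?aS (j-1) * ?pS (j-1)) = (\<Sum>j=1..N. ?c j * ?aS j * ?pS j)"
    using shift_sum[OF N1, of "\<lambda>k. ?c k * ?aS k * ?pS k"] by (simp add: per)
  have s5: "(\<Sum>j=1..N. ?c (j-1) * ?pR (j-1) * ?pS (j-1)) = (\<Sum>j=1..N. ?c j * ?pR j * ?pS j)"
    using shift_sum[OF N1, of "\<lambda>k. ?c k * ?pR k * ?pS k"] by (simp add: per)
  have s6: "(\<Sum>j=1..N. ?c (j-1) * ?pS (j-1) * ?pS (j-1)) = (\<Sum>j=1..N. ?c j * ?pS j * ?pS j)"
    using shift_sum[OF N1, of "\<lambda>k. ?c k * ?pS k * ?pS k"] by (simp add: per)
  have X0: "(\<Sum>k=1..N. ?c k * ?aR k * ?mR k - ?c k * ?aR k * ?pR k - (1/2) * (?c k * ?mR k * ?mR k)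
     + (1/2) * (?c k * ?pR k * ?pR k) + (1/2) * (?c k * ?mS k * ?mR k) - (1/2) * (?c k * ?pS k * ?pR k)
     - ?c k * ?aS k * ?mS k + ?c k * ?aS k * ?pS k - (1/2) * (?c k * ?mR k * ?mS k)
     + (1/2) * (?c k * ?pR k * ?pS k) + (1/2) * (?c k * ?mS k * ?mS k) - (1/2) * (?c k * ?pS k * ?pS k)) = 0"
    unfolding avg_def by (intro sum.neutral ballI) (rule alg0)
  have X1: "(\<Sum>k=1..N. ?c k * ?aR k * ?mR k - ?c k * ?aR k * ?pR k - (1/2) * (?c k * ?mR k * ?mR k)
     + (1/2) * (?c k * ?pR k * ?pR k) + (1/2) * (?c k * ?mS k * ?mR k) - (1/2) * (?c k * ?pS k * ?pR k)
     - ?c k * ?aS k * ?mS k + ?c k * ?aS k * ?pS k - (1/2) * (?c k * ?mR k * ?mS k)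
     + (1/2) * (?c k * ?pR k * ?pS k) + (1/2) * (?c k * ?mS k * ?mS k) - (1/2) * (?c k * ?pS k * ?pS k))
     = (\<Sum>k=1..N. ?c k * ?aR k * ?mR k) - (\<Sum>k=1..N. ?c k * ?aR k * ?pR k) - (1/2) * (\<Sum>k=1..N. ?c k * ?mR k * ?mR k)
     + (1/2) * (\<Sum>k=1..N. ?c k * ?pR k * ?pR k) + (1/2) * (\<Sum>k=1..N. ?c k * ?mS k * ?mR k) - (1/2) * (\<Sum>k=1..N. ?c k * ?pS k * ?pR k)
     - (\<Sum>k=1..N. ?c k * ?aS k * ?mS k) + (\<Sum>k=1..N. ?c k * ?aS k * ?pS k) - (1/2) * (\<Sum>k=1..N. ?c k * ?mR k * ?mS k)
     + (1/2) * (\<Sum>k=1..N. ?c k * ?pR k * ?pS k) + (1/2) * (\<Sum>k=1..N. ?c k * ?mS k * ?mS k) - (1/2) * (\<Sum>k=1..N. ?c k * ?pS k * ?pS k)"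
    by (simp only: sum.distrib sum_subtractf sum_distrib_left)
  have key: "(\<Sum>j=1..N. cellint xn j (\<lambda>x. poly (Rt t j) x * poly (R t j) x)
      + cellint xn j (\<lambda>x. poly (St t j) x * poly (S t j) x)) = 0"
    using hR hS I1 I2 I3 s1 s2 s3 s4 s5 s6 X0 X1 by (simp add: sum.distrib)
  have "((\<lambda>s. \<Sum>j=1..N. cellint xn j (\<lambda>x. ((poly (R s j) x)\<^sup>2 + (poly (S s j) x)\<^sup>2) / 2))
       has_real_derivative (\<Sum>j=1..N. cellint xn j (\<lambda>x. poly (Rt t j) x * poly (R t j) x)
      + cellint xn j (\<lambda>x. poly (St t j) x * poly (S t j) x))) (at t within {0..T})"
    by (rule DERIV_sum) (rule dj)
  then show "((\<lambda>s. \<Sum>j=1..N. cellint xn j (\<lambda>x. ((poly (R s j) x)\<^sup>2 + (poly (S s j) x)\<^sup>2) / 2))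
       has_real_derivative 0) (at t within {0..T})" using key by simp
qed

end
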